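(* Let $\alpha\ge0$, $\beta>0$, $\gamma\in\mathbb{R}$, $n\ge2$. Let $f=(f^1,\dots,f^n):\mathbb{R}_+\to\{(x^1,\dots,x^n)\in\mathbb{R}_+^n:\ 0\le x^1\le\dots\le x^n\}$ be a continuous deterministic function such that $0\le f^1_t<f^2_t<\dots<f^n_t$ for $dt$-almost every $t$. Then for all $t\ge0$, $$\sum_{i=1}^{n-1}\int_0^t\frac{f^{i+1}_s}{f^{i+1}_s-f^i_s}\,ds<+\infty\iff\sum_{i=1}^n\int_0^t\Big|\alpha-2\gamma f^i_s+\beta\sum_{j\ne i}\frac{f^i_s+f^j_s}{f^i_s-f^j_s}\Big|\,ds<+\infty,$$ with the convention that for $i\ne j$, $\frac{f^i_s}{f^j_s-f^i_s}=+\infty$ when $f^j_s=f^i_s$. *)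

theory Defs
  imports "HOL-Analysis.Analysis"
begin

definition gap_ratio :: "real \<Rightarrow> real \<Rightarrow> ennreal" where
  "gap_ratio a b = (if a = b then \<infinity> else ennreal (b / (b - a)))"

end

theory Submission
  imports Defs
begin


lemma chain_le:
  fixes x :: "nat \<Rightarrow> real"
  assumes "\<And>i. 1 \<le> i \<Longrightarrow> i < n \<Longrightarrow> x i \<le> x (Suc i)"
  shows "1 \<le> i \<Longrightarrow> i \<le> j \<Longrightarrow> j \<le> n \<Longrightarrow> x i \<le> x j"
proof (induction j)
  case 0 then show ?case by simp
next
  case (Suc j)
  show ?case
  proof (cases "i = Suc j")
    case True then show ?thesis by simp
  next
    case False
    then have "i \<le> j" using Suc by simp
    then have "x i \<le> x j" using Suc by simp
    also have "x j \<le> x (Suc j)" using assms[of j] Suc \<open>i \<le> j\<close> by simp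
    finally show ?thesis .
  qed
qed

lemma chain_lt:
  fixes x :: "nat \<Rightarrow> real"
  assumes "\<And>i. 1 \<le> i \<Longrightarrow> i < n \<Longrightarrow> x i < x (Suc i)"
  shows "1 \<le> i \<Longrightarrow> i < j \<Longrightarrow> j \<le> n \<Longrightarrow> x i < x j"
proof (induction j)
  case 0 then show ?case by simp
next
  case (Suc j)
  show ?case
  proof (cases "i = j")
    case True then show ?thesis using assms[of j] Suc by simp
  next
    case False
    then have "i < j" using Suc by simp
    then have "x i < x j" using Suc by simp
    also have "x j < x (Suc j)" using assms[of j] Suc \<open>i < j\<close> by simp
    finally show ?thesis .
  qed
qed

lemma pair_bound:
  fixes a b c :: real
  assumes "0 \<le> a" "a \<le> c" "c < b"
  shows "(a+b)/(b-a) \<le> 2*(b/(b-c))"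
proof -
  have "(a+b)/(b-a) \<le> (2*b)/(b-a)" using assms by (intro divide_right_mono) auto
  also have "\<dots> \<le> (2*b)/(b-c)" using assms by (intro frac_le) auto
  finally show ?thesis by simp
qed

lemma sum_le_one_nonpos:
  fixes h :: "'a \<Rightarrow> real"
  assumes "finite A" "a \<in> A" "\<And>i. i \<in> A \<Longrightarrow> h i \<le> 0"
  shows "sum h A \<le> h a"
proof -
  have "sum h A = h a + sum h (A - {a})" using assms by (simp add: sum.remove)
  moreover have "sum h (A - {a}) \<le> 0" using assms by (intro sum_nonpos) auto
  ultimately show ?thesis by simp
qed

lemma antisym_sum_zero:
  fixes phx :: "nat \<Rightarrow> nat \<Rightarrow> real"
  assumes "\<And>i j. phx i j = - phx j i"
  shows "(\<Sum>i\<in>K. \<Sum>j\<in>K. phx i j) = 0"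
proof -
  have "(\<Sum>i\<in>K. \<Sum>j\<in>K. phx i j) = (\<Sum>j\<in>K. \<Sum>i\<in>K. phx i j)" by (rule sum.swap)
  also have "\<dots> = (\<Sum>j\<in>K. \<Sum>i\<in>K. - phx j i)"
    by (rule sum.cong[OF refl], rule sum.cong[OF refl], rule assms)
  also have "\<dots> = - (\<Sum>j\<in>K. \<Sum>i\<in>K. phx j i)" by (simp add: sum_negf)
  finally show ?thesis by simp
qed

lemma frac_swap: fixes a b :: real shows "(a+b)/(a-b) = -((b+a)/(b-a))"
proof -
  have "a - b = -(b-a)" by simp
  then have "(a+b)/(a-b) = (a+b)/(-(b-a))" by (simp only:)
  also have "\<dots> = -((a+b)/(b-a))" by (rule divide_minus_right)
  finally show ?thesis by (simp add: add.commute)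
qed

lemma frac_swap2: fixes a b :: real shows "(a+b)/(a-b) = -((a+b)/(b-a))"
  using frac_swap[of a b] by (simp add: add.commute)

context
  fixes x :: "nat \<Rightarrow> real" and n :: nat and B \<alpha> \<beta> \<gamma> :: real
  assumes H1: "\<And>i. 1 \<le> i \<Longrightarrow> i < n \<Longrightarrow> x i < x (Suc i)"
    and H2: "0 \<le> x 1"
    and H3: "\<And>i. i \<in> {1..n} \<Longrightarrow> \<bar>x i\<bar> \<le> B"
    and Ha: "\<alpha> \<ge> 0" and Hb: "\<beta> > 0"
begin

definition "Gx = (\<Sum>k\<in>{1..n-1}. x (Suc k) / (x (Suc k) - x k))"
definition "phx i j = (x i + x j) / (x i - x j)"
definition "Dx i = \<alpha> - 2 * \<gamma> * x i + \<beta> * (\<Sum>j\<in>{1..n} - {i}. phx i j)"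

lemma H1': "1 \<le> i \<Longrightarrow> i < n \<Longrightarrow> x i \<le> x (Suc i)"
  by (rule less_imp_le[OF H1])

lemma xnonneg: assumes "i \<in> {1..n}" shows "0 \<le> x i"
proof -
  have "x 1 \<le> x i" by (rule chain_le[of n x, OF H1']) (use assms in auto)
  then show ?thesis using H2 by linarith
qed

lemma gnonneg: "k \<in> {1..n-1} \<Longrightarrow> 0 \<le> x (Suc k) / (x (Suc k) - x k)"
proof -
  assume k: "k \<in> {1..n-1}"
  then have "k < n" "1 \<le> k" by auto
  then have "x k < x (Suc k)" by (rule H1[rotated])
  moreover have "0 \<le> x (Suc k)" using xnonneg[of "Suc k"] k by auto
  ultimately show ?thesis by (intro divide_nonneg_nonneg) auto
qed

lemma absterm:
  assumes "i \<in> {1..n}" "j \<in> {1..n}" "i \<noteq> j"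
  shows "\<bar>phx i j\<bar> \<le> 2 * Gx"
proof -
  have key: "\<bar>phx a b\<bar> \<le> 2 * Gx" if "a \<in> {1..n}" "b \<in> {1..n}" "a < b" for a b
  proof -
    have ab: "x a < x b" by (rule chain_lt[of n x, OF H1]) (use that in auto)
    have xa0: "0 \<le> x a" by (rule xnonneg) (use that in auto)
    have b1: "Suc (b - 1) = b" using that by auto
    have c1: "x a \<le> x (b - 1)"
      by (rule chain_le[of n x, OF H1']) (use that in auto)
    have "x (b-1) < x (Suc (b-1))" by (rule H1) (use that in auto)
    then have c2: "x (b-1) < x b" unfolding b1 .
    have "(x a + x b)/(x b - x a) \<le> 2*(x b/(x b - x (b-1)))"
      by (rule pair_bound[OF xa0 c1 c2])
    moreover have "\<bar>phx a b\<bar> = (x a + x b)/(x b - x a)"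
    proof -
      have "0 \<le> (x a + x b)/(x b - x a)" using ab xa0 by (intro divide_nonneg_nonneg) auto
      moreover have "phx a b = - ((x a + x b)/(x b - x a))" unfolding phx_def
        by (rule frac_swap2)
      ultimately show ?thesis by (simp only: abs_minus_cancel abs_of_nonneg)
    qed
    moreover have "x b/(x b - x (b-1)) \<le> Gx"
    proof -
      have "b - 1 \<in> {1..n-1}" using that by auto
      then have "x (Suc (b-1)) / (x (Suc (b-1)) - x (b-1)) \<le> Gx"
        unfolding Gx_def by (intro member_le_sum gnonneg) auto
      then show ?thesis using that by simp
    qed
    ultimately show ?thesis by linarith
  qed
  have sym: "\<bar>phx i j\<bar> = \<bar>phx j i\<bar>" unfolding phx_def
    by (simp only: frac_swap[of "x i" "x j"] abs_minus_cancel)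
  show ?thesis
  proof (cases "i < j")
    case True
    show ?thesis by (rule key) (use assms True in auto)
  next
    case False
    then have "j < i" using assms(3) by linarith
    have "\<bar>phx j i\<bar> \<le> 2 * Gx" by (rule key) (use assms \<open>j < i\<close> in auto)
    then show ?thesis using sym by simp
  qed
qed

lemma Gnonneg: "0 \<le> Gx" unfolding Gx_def by (intro sum_nonneg gnonneg)

lemma boundA: "(\<Sum>i\<in>{1..n}. \<bar>Dx i\<bar>) \<le> n * (\<alpha> + 2 * \<bar>\<gamma>\<bar> * B) + (2 * \<beta> * n * n) * Gx"
proof -
  have "\<bar>Dx i\<bar> \<le> (\<alpha> + 2 * \<bar>\<gamma>\<bar> * B) + (2 * \<beta> * n) * Gx" if i: "i \<in> {1..n}" for i
  proof -
    have s: "\<bar>\<Sum>j\<in>{1..n} - {i}. phx i j\<bar> \<le> (\<Sum>j\<in>{1..n} - {i}. 2 * Gx)"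
      by (rule order_trans[OF sum_abs]) (intro sum_mono absterm, use i in auto)
    also have "\<dots> = (real n - 1) * (2 * Gx)" using i by (simp add: card_Diff_singleton_if of_nat_diff)
    also have "\<dots> \<le> n * (2 * Gx)" using Gnonneg by (intro mult_right_mono) auto
    finally have s2: "\<bar>\<Sum>j\<in>{1..n} - {i}. phx i j\<bar> \<le> n * (2 * Gx)" .
    have "\<bar>Dx i\<bar> \<le> \<alpha> + \<bar>2 * \<gamma> * x i\<bar> + \<beta> * \<bar>\<Sum>j\<in>{1..n} - {i}. phx i j\<bar>"
    proof -
      have "\<bar>\<beta> * (\<Sum>j\<in>{1..n} - {i}. phx i j)\<bar> = \<beta> * \<bar>\<Sum>j\<in>{1..n} - {i}. phx i j\<bar>"
        using Hb by (simp add: abs_mult)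
      then show ?thesis unfolding Dx_def using Ha by linarith
    qed
    moreover have "\<bar>2 * \<gamma> * x i\<bar> \<le> 2 * \<bar>\<gamma>\<bar> * B"
    proof -
      have "\<bar>2 * \<gamma> * x i\<bar> = (2 * \<bar>\<gamma>\<bar>) * \<bar>x i\<bar>" by (simp add: abs_mult)
      also have "\<dots> \<le> (2 * \<bar>\<gamma>\<bar>) * B" using H3[OF i] by (intro mult_left_mono) auto
      finally show ?thesis .
    qed
    moreover have "\<beta> * \<bar>\<Sum>j\<in>{1..n} - {i}. phx i j\<bar> \<le> \<beta> * (n * (2 * Gx))"
      using s2 Hb by (intro mult_left_mono) auto
    moreover have "\<beta> * (n * (2 * Gx)) = (2 * \<beta> * n) * Gx" by simp
    ultimately show ?thesis by linarith
  qed
  then have "(\<Sum>i\<in>{1..n}. \<bar>Dx i\<bar>) \<le> (\<Sum>i\<in>{1..n}. (\<alpha> + 2 * \<bar>\<gamma>\<bar> * B) + (2 * \<beta> * n) * Gx)"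
    by (intro sum_mono) auto
  also have "\<dots> = n * (\<alpha> + 2 * \<bar>\<gamma>\<bar> * B) + (2 * \<beta> * n * n) * Gx" by (simp add: algebra_simps)
  finally show ?thesis .
qed


lemma phi_diag: "phx i i = 0" unfolding phx_def by simp
lemma phi_anti: "phx i j = - phx j i" unfolding phx_def
  by (rule frac_swap)

lemma boundB:
  assumes k: "k \<in> {1..n-1}"
  shows "\<beta> * (x (Suc k) / (x (Suc k) - x k)) \<le> n * \<alpha> + 2 * \<bar>\<gamma>\<bar> * n * B + (\<Sum>i\<in>{1..n}. \<bar>Dx i\<bar>)"
proof -
  define K where "K = {1..k}"
  define U where "U = {Suc k..n}"
  have KU: "{1..n} = K \<union> U" "K \<inter> U = {}" using k unfolding K_def U_def by auto
  have rm: "(\<Sum>j\<in>{1..n} - {i}. phx i j) = (\<Sum>j\<in>K. phx i j) + (\<Sum>j\<in>U. phx i j)" for i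
  proof -
    have "(\<Sum>j\<in>{1..n} - {i}. phx i j) = (\<Sum>j\<in>{1..n}. phx i j)"
      by (simp add: sum_diff1 phi_diag)
    also have "\<dots> = (\<Sum>j\<in>K. phx i j) + (\<Sum>j\<in>U. phx i j)"
      unfolding KU(1) by (rule sum.union_disjoint) (use KU(2) in \<open>auto simp: K_def U_def\<close>)
    finally show ?thesis .
  qed
  define T where "T = (\<Sum>i\<in>K. \<Sum>j\<in>U. phx i j)"
  have sumD: "(\<Sum>i\<in>K. Dx i) = k * \<alpha> - 2 * \<gamma> * (\<Sum>i\<in>K. x i) + \<beta> * T"
  proof -
    have "(\<Sum>i\<in>K. Dx i) = (\<Sum>i\<in>K. \<alpha> - 2 * \<gamma> * x i + \<beta> * ((\<Sum>j\<in>K. phx i j) + (\<Sum>j\<in>U. phx i j)))"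
      unfolding Dx_def rm ..
    also have "\<dots> = k * \<alpha> - 2 * \<gamma> * (\<Sum>i\<in>K. x i) + \<beta> * (\<Sum>i\<in>K. \<Sum>j\<in>K. phx i j) + \<beta> * T"
      unfolding T_def by (simp add: sum.distrib sum_subtractf sum_distrib_left K_def algebra_simps)
    also have "(\<Sum>i\<in>K. \<Sum>j\<in>K. phx i j) = 0" by (rule antisym_sum_zero) (rule phi_anti)
    finally show ?thesis by simp
  qed
  have neg: "phx i j \<le> 0" if "i \<in> K" "j \<in> U" for i j
  proof -
    have "x i < x j" using chain_lt[of n x i j] H1 that k by (auto simp: K_def U_def)
    moreover have "0 \<le> x i" "0 \<le> x j" using xnonneg that k by (auto simp: K_def U_def)
    ultimately show ?thesis unfolding phx_def by (intro divide_nonneg_neg) auto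
  qed
  have kK: "k \<in> K" and kU: "Suc k \<in> U" using k by (auto simp: K_def U_def)
  have "T \<le> (\<Sum>j\<in>U. phx k j)" unfolding T_def
    by (rule sum_le_one_nonpos) (use kK neg in \<open>auto simp: K_def U_def intro!: sum_nonpos\<close>)
  also have "\<dots> \<le> phx k (Suc k)"
    by (rule sum_le_one_nonpos) (use kK kU neg in \<open>auto simp: U_def\<close>)
  also have "\<dots> \<le> - (x (Suc k) / (x (Suc k) - x k))"
  proof -
    have lt: "x k < x (Suc k)" using H1[of k] k by auto
    have x0: "0 \<le> x k" using xnonneg[of k] k by auto
    have "phx k (Suc k) = - ((x k + x (Suc k)) / (x (Suc k) - x k))" unfolding phx_def
      by (rule frac_swap2)
    moreover have "x (Suc k) / (x (Suc k) - x k) \<le> (x k + x (Suc k)) / (x (Suc k) - x k)"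
      using lt x0 by (intro divide_right_mono) auto
    ultimately show ?thesis by linarith
  qed
  finally have "\<beta> * (x (Suc k) / (x (Suc k) - x k)) \<le> \<beta> * (- T)"
    using Hb by (intro mult_left_mono) auto
  then have T: "\<beta> * (x (Suc k) / (x (Suc k) - x k)) \<le> - \<beta> * T" by simp
  have xs: "\<bar>\<Sum>i\<in>K. x i\<bar> \<le> n * B"
  proof -
    have "\<bar>\<Sum>i\<in>K. x i\<bar> \<le> (\<Sum>i\<in>K. B)"
      by (rule order_trans[OF sum_abs]) (rule sum_mono, rule H3, use k in \<open>auto simp: K_def\<close>)
    also have "\<dots> = k * B" by (simp add: K_def)
    also have "\<dots> \<le> n * B"
    proof -
      have "(1::nat) \<in> {1..n}" using k by auto
      from H3[OF this] have "0 \<le> B" by linarith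
      then show ?thesis using k by (intro mult_right_mono) auto
    qed
    finally show ?thesis .
  qed
  have g: "- 2 * \<gamma> * (\<Sum>i\<in>K. x i) \<le> 2 * \<bar>\<gamma>\<bar> * n * B"
  proof -
    have "- 2 * \<gamma> * (\<Sum>i\<in>K. x i) \<le> 2 * \<bar>\<gamma>\<bar> * \<bar>\<Sum>i\<in>K. x i\<bar>"
      by (simp add: abs_mult[symmetric] abs_le_iff)
    also have "\<dots> \<le> 2 * \<bar>\<gamma>\<bar> * (n * B)" using xs by (intro mult_left_mono) auto
    finally show ?thesis by simp
  qed
  have d: "- (\<Sum>i\<in>K. Dx i) \<le> (\<Sum>i\<in>{1..n}. \<bar>Dx i\<bar>)"
  proof -
    have "- (\<Sum>i\<in>K. Dx i) \<le> (\<Sum>i\<in>K. \<bar>Dx i\<bar>)"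
      using sum_abs[of Dx K] abs_ge_minus_self[of "sum Dx K"] by linarith
    also have "\<dots> \<le> (\<Sum>i\<in>{1..n}. \<bar>Dx i\<bar>)" by (rule sum_mono2) (use k in \<open>auto simp: K_def\<close>)
    finally show ?thesis .
  qed
  have "k * \<alpha> \<le> n * \<alpha>" using k Ha by (intro mult_right_mono) auto
  then show ?thesis using T sumD g d by linarith
qed

lemma boundG: "\<beta> * Gx \<le> (n - 1) * (n * \<alpha> + 2 * \<bar>\<gamma>\<bar> * n * B + (\<Sum>i\<in>{1..n}. \<bar>Dx i\<bar>))"
proof -
  define R where "R = n * \<alpha> + 2 * \<bar>\<gamma>\<bar> * n * B + (\<Sum>i\<in>{1..n}. \<bar>Dx i\<bar>)"
  have "\<beta> * Gx = (\<Sum>k\<in>{1..n-1}. \<beta> * (x (Suc k) / (x (Suc k) - x k)))"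
    unfolding Gx_def by (rule sum_distrib_left)
  also have "\<dots> \<le> (\<Sum>k\<in>{1..n-1}. R)"
    unfolding R_def by (rule sum_mono, rule boundB)
  also have "\<dots> = real (card {1..n-1}) * R" by (rule sum_constant)
  also have "card {1..n-1} = n - 1" by simp
  finally show ?thesis unfolding R_def .
qed

end



lemma fin_transfer:
  fixes u v :: "real \<Rightarrow> real"
  assumes vm[measurable]: "v \<in> borel_measurable borel"
    and AE: "AE s in lborel. s \<in> {a..b} \<longrightarrow> u s \<le> C + c * v s" and c: "0 \<le> c" "0 \<le> C"
    and fin: "(\<integral>\<^sup>+ s\<in>{a..b}. ennreal (v s) \<partial>lborel) < \<infinity>"
  shows "(\<integral>\<^sup>+ s\<in>{a..b}. ennreal (u s) \<partial>lborel) < \<infinity>"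
proof -
  have "(\<integral>\<^sup>+ s\<in>{a..b}. ennreal (u s) \<partial>lborel) \<le>
     (\<integral>\<^sup>+ s. ennreal C * indicator {a..b} s + ennreal c * (ennreal (v s) * indicator {a..b} s) \<partial>lborel)"
  proof (rule nn_integral_mono_AE)
    show "AE s in lborel. ennreal (u s) * indicator {a..b} s \<le> ennreal C * indicator {a..b} s + ennreal c * (ennreal (v s) * indicator {a..b} s)"
    using AE proof eventually_elim
      fix s assume h: "s \<in> {a..b} \<longrightarrow> u s \<le> C + c * v s"
      show "ennreal (u s) * indicator {a..b} s \<le> ennreal C * indicator {a..b} s + ennreal c * (ennreal (v s) * indicator {a..b} s)"
      proof (cases "s \<in> {a..b}")
        case True
        have "ennreal (u s) \<le> ennreal (C + c * v s)" using h True by (intro ennreal_leI) auto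
        also have "\<dots> \<le> ennreal C + ennreal (c * v s)" 
        proof (cases "0 \<le> c * v s")
          case True then show ?thesis using c by (simp add: ennreal_plus)
        next
          case False
          then have "ennreal (C + c * v s) \<le> ennreal C" by (intro ennreal_leI) auto
          then show ?thesis by (simp add: add_increasing2)
        qed
        also have "ennreal (c * v s) = ennreal c * ennreal (v s)" using c by (simp add: ennreal_mult')
        finally show ?thesis using True by simp
      qed simp
    qed
  qed
  also have "\<dots> = ennreal C * emeasure lborel {a..b} + ennreal c * (\<integral>\<^sup>+ s\<in>{a..b}. ennreal (v s) \<partial>lborel)"
    by (subst nn_integral_add) (auto simp: nn_integral_cmult)
  also have "\<dots> < \<infinity>" using fin
    by (simp add: ennreal_mult_less_top ennreal_mult_eq_top_iff emeasure_lborel_Icc_eq)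
  finally show ?thesis .
qed

lemma sum_int:
  fixes u :: "nat \<Rightarrow> real \<Rightarrow> real"
  assumes m: "\<And>i. i \<in> I \<Longrightarrow> u i \<in> borel_measurable borel"
    and nn: "\<And>i s. i \<in> I \<Longrightarrow> s \<in> A \<Longrightarrow> 0 \<le> u i s" and A: "A \<in> sets borel"
  shows "(\<Sum>i\<in>I. \<integral>\<^sup>+ s\<in>A. ennreal (u i s) \<partial>lborel) = (\<integral>\<^sup>+ s\<in>A. ennreal (\<Sum>i\<in>I. u i s) \<partial>lborel)"
proof -
  have "(\<integral>\<^sup>+ s\<in>A. ennreal (\<Sum>i\<in>I. u i s) \<partial>lborel) = (\<integral>\<^sup>+ s. (\<Sum>i\<in>I. ennreal (u i s) * indicator A s) \<partial>lborel)"
  proof (rule nn_integral_cong)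
    fix s show "ennreal (\<Sum>i\<in>I. u i s) * indicator A s = (\<Sum>i\<in>I. ennreal (u i s) * indicator A s)"
    proof (cases "s \<in> A")
      case True then show ?thesis using nn by (simp add: sum_ennreal)
    qed simp
  qed
  also have "\<dots> = (\<Sum>i\<in>I. \<integral>\<^sup>+ s\<in>A. ennreal (u i s) \<partial>lborel)"
    by (rule nn_integral_sum) (use m A in auto)
  finally show ?thesis ..
qed

theorem lemma2:
  fixes \<alpha> \<beta> \<gamma> :: real and n :: nat and f :: "nat \<Rightarrow> real \<Rightarrow> real" and t :: real
  assumes "\<alpha> \<ge> 0" and "\<beta> > 0" and "n \<ge> 2"
    and cont: "\<And>i. i \<in> {1..n} \<Longrightarrow> continuous_on {0..} (f i)"
    and nonneg: "\<And>s. s \<ge> 0 \<Longrightarrow> 0 \<le> f 1 s"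
    and ordered: "\<And>i s. s \<ge> 0 \<Longrightarrow> 1 \<le> i \<Longrightarrow> i < n \<Longrightarrow> f i s \<le> f (Suc i) s"
    and strict: "AE s in lborel. s \<ge> 0 \<longrightarrow> (\<forall>i. 1 \<le> i \<and> i < n \<longrightarrow> f i s < f (Suc i) s)"
    and "t \<ge> 0"
  shows "(\<Sum>i\<in>{1..n-1}. \<integral>\<^sup>+ s\<in>{0..t}. gap_ratio (f i s) (f (Suc i) s) \<partial>lborel) < \<infinity>
     \<longleftrightarrow> (\<Sum>i\<in>{1..n}. \<integral>\<^sup>+ s\<in>{0..t}. ennreal \<bar>\<alpha> - 2 * \<gamma> * f i s
            + \<beta> * (\<Sum>j\<in>{1..n} - {i}. (f i s + f j s) / (f i s - f j s))\<bar> \<partial>lborel) < \<infinity>"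
proof -
  note Ha = \<open>\<alpha> \<ge> 0\<close> and Hb = \<open>\<beta> > 0\<close>
  define F where "F i s = (if i \<in> {1..n} then f i (max 0 s) else 0)" for i s
  have Fcont: "continuous_on UNIV (F i)" for i
  proof (cases "i \<in> {1..n}")
    case True
    have "continuous_on UNIV (\<lambda>s. f i (max 0 s))"
      by (rule continuous_on_compose2[OF cont[OF True]]) (auto intro!: continuous_intros)
    then show ?thesis using True unfolding F_def by simp
  next
    case False
    then have "F i = (\<lambda>s. 0)" unfolding F_def by (auto simp: fun_eq_iff)
    then show ?thesis by simp
  qed
  have Fm[measurable]: "F i \<in> borel_measurable borel" for i
    by (rule borel_measurable_continuous_onI[OF Fcont])
  have Feq: "F i s = f i s" if "i \<in> {1..n}" "0 \<le> s" for i s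
    using that unfolding F_def by simp
  define g where "g k s = F (Suc k) s / (F (Suc k) s - F k s)" for k s
  define G where "G s = (\<Sum>k\<in>{1..n-1}. g k s)" for s
  define Dabs where "Dabs i s = \<bar>\<alpha> - 2 * \<gamma> * F i s + \<beta> * (\<Sum>j\<in>{1..n} - {i}. (F i s + F j s) / (F i s - F j s))\<bar>" for i s
  define SA where "SA s = (\<Sum>i\<in>{1..n}. Dabs i s)" for s
  have gm[measurable]: "g k \<in> borel_measurable borel" for k unfolding g_def by measurable
  have Dm[measurable]: "Dabs i \<in> borel_measurable borel" for i unfolding Dabs_def by measurable
  have Gm[measurable]: "G \<in> borel_measurable borel" unfolding G_def by measurable
  have SAm[measurable]: "SA \<in> borel_measurable borel" unfolding SA_def by measurable
  have gnn: "0 \<le> g k s" if "k \<in> {1..n-1}" "s \<in> {0..t}" for k s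
  proof -
    have s0: "0 \<le> s" using that by auto
    have "f 1 s \<le> f (Suc k) s"
      by (rule chain_le[of n "\<lambda>i. f i s"]) (use ordered[OF s0] that in auto)
    then have "0 \<le> f (Suc k) s" using nonneg[OF s0] by linarith
    moreover have "f k s \<le> f (Suc k) s" using ordered[OF s0, of k] that by auto
    ultimately show ?thesis unfolding g_def using that Feq[of k s] Feq[of "Suc k" s]
      by (intro divide_nonneg_nonneg) auto
  qed
  have L: "(\<Sum>i\<in>{1..n-1}. \<integral>\<^sup>+ s\<in>{0..t}. gap_ratio (f i s) (f (Suc i) s) \<partial>lborel)
      = (\<integral>\<^sup>+ s\<in>{0..t}. ennreal (G s) \<partial>lborel)"
  proof -
    have "(\<Sum>i\<in>{1..n-1}. \<integral>\<^sup>+ s\<in>{0..t}. gap_ratio (f i s) (f (Suc i) s) \<partial>lborel)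
        = (\<Sum>i\<in>{1..n-1}. \<integral>\<^sup>+ s\<in>{0..t}. ennreal (g i s) \<partial>lborel)"
    proof (rule sum.cong[OF refl], rule nn_integral_cong_AE)
      fix k assume k: "k \<in> {1..n-1}"
      show "AE s in lborel. gap_ratio (f k s) (f (Suc k) s) * indicator {0..t} s = ennreal (g k s) * indicator {0..t} s"
        using strict
      proof eventually_elim
        case (elim s)
        show ?case
        proof (cases "s \<in> {0..t}")
          case True
          then have "f k s < f (Suc k) s" using elim k by auto
          then show ?thesis unfolding gap_ratio_def g_def using True k Feq[of k s] Feq[of "Suc k" s] by auto
        qed simp
      qed
    qed
    also have "\<dots> = (\<integral>\<^sup>+ s\<in>{0..t}. ennreal (G s) \<partial>lborel)"
      unfolding G_def by (rule sum_int) (use gnn in auto)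
    finally show ?thesis .
  qed
  have R: "(\<Sum>i\<in>{1..n}. \<integral>\<^sup>+ s\<in>{0..t}. ennreal \<bar>\<alpha> - 2 * \<gamma> * f i s
            + \<beta> * (\<Sum>j\<in>{1..n} - {i}. (f i s + f j s) / (f i s - f j s))\<bar> \<partial>lborel)
      = (\<integral>\<^sup>+ s\<in>{0..t}. ennreal (SA s) \<partial>lborel)"
  proof -
    have "(\<Sum>i\<in>{1..n}. \<integral>\<^sup>+ s\<in>{0..t}. ennreal \<bar>\<alpha> - 2 * \<gamma> * f i s
            + \<beta> * (\<Sum>j\<in>{1..n} - {i}. (f i s + f j s) / (f i s - f j s))\<bar> \<partial>lborel)
      = (\<Sum>i\<in>{1..n}. \<integral>\<^sup>+ s\<in>{0..t}. ennreal (Dabs i s) \<partial>lborel)"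
    proof (rule sum.cong[OF refl], rule nn_integral_cong)
      fix i s assume i: "i \<in> {1..n}"
      show "ennreal \<bar>\<alpha> - 2 * \<gamma> * f i s + \<beta> * (\<Sum>j\<in>{1..n} - {i}. (f i s + f j s) / (f i s - f j s))\<bar> * indicator {0..t} s
          = ennreal (Dabs i s) * indicator {0..t} s"
      proof (cases "s \<in> {0..t}")
        case True
        have "(\<Sum>j\<in>{1..n} - {i}. (f i s + f j s) / (f i s - f j s)) = (\<Sum>j\<in>{1..n} - {i}. (F i s + F j s) / (F i s - F j s))"
          by (rule sum.cong[OF refl]) (use True i Feq in auto)
        then show ?thesis unfolding Dabs_def using True i Feq[of i s] by simp
      qed simp
    qed
    also have "\<dots> = (\<integral>\<^sup>+ s\<in>{0..t}. ennreal (SA s) \<partial>lborel)"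
      unfolding SA_def by (rule sum_int) (auto simp: Dabs_def)
    finally show ?thesis .
  qed
  have "\<forall>i\<in>{1..n}. \<exists>b. \<forall>s\<in>{0..t}. \<bar>f i s\<bar> \<le> b"
  proof
    fix i assume i: "i \<in> {1..n}"
    have "continuous_on {0..t} (f i)" by (rule continuous_on_subset[OF cont[OF i]]) auto
    then have "bounded (f i ` {0..t})" by (intro compact_imp_bounded compact_continuous_image) auto
    then show "\<exists>b. \<forall>s\<in>{0..t}. \<bar>f i s\<bar> \<le> b" unfolding bounded_iff by auto
  qed
  then obtain Bf where Bf: "\<And>i s. i \<in> {1..n} \<Longrightarrow> s \<in> {0..t} \<Longrightarrow> \<bar>f i s\<bar> \<le> Bf i"
    by metis
  define B where "B = (\<Sum>i\<in>{1..n}. \<bar>Bf i\<bar>)"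
  have HB: "\<bar>f i s\<bar> \<le> B" if "i \<in> {1..n}" "s \<in> {0..t}" for i s
  proof -
    have "\<bar>Bf i\<bar> \<le> B" unfolding B_def by (rule member_le_sum) (use that in auto)
    then show ?thesis using Bf[OF that] by linarith
  qed
  have B0: "0 \<le> B" unfolding B_def by (intro sum_nonneg) auto
  have pw: "SA s \<le> n * (\<alpha> + 2 * \<bar>\<gamma>\<bar> * B) + (2 * \<beta> * n * n) * G s \<and>
            \<beta> * G s \<le> (n - 1) * (n * \<alpha> + 2 * \<bar>\<gamma>\<bar> * n * B + SA s)"
    if s: "s \<in> {0..t}" and st: "\<forall>i. 1 \<le> i \<and> i < n \<longrightarrow> f i s < f (Suc i) s" for s
  proof -
    define x where "x i = F i s" for i
    have H1: "x i < x (Suc i)" if "1 \<le> i" "i < n" for i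
      unfolding x_def using that st s Feq[of i s] Feq[of "Suc i" s] by auto
    have H2: "0 \<le> x 1" unfolding x_def using s Feq[of 1 s] nonneg[of s] \<open>n \<ge> 2\<close> by auto
    have H3: "\<bar>x i\<bar> \<le> B" if "i \<in> {1..n}" for i
      unfolding x_def using that s Feq[of i s] HB[of i s] by auto
    note defs = Gx_def[where x=x and n=n and B=B, OF H1 H2 H3 Ha Hb] Dx_def[where x=x and n=n and B=B and \<gamma>=\<gamma>, OF H1 H2 H3 Ha Hb] phx_def[where x=x and n=n and B=B, OF H1 H2 H3 Ha Hb]
    have eG: "Gx x n = G s" by (simp only: defs) (simp add: G_def g_def x_def)
    have eD: "(\<Sum>i\<in>{1..n}. \<bar>Dx x n \<alpha> \<beta> \<gamma> i\<bar>) = SA s"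
      by (simp only: defs) (simp add: SA_def Dabs_def x_def)
    show ?thesis
      using boundA[where x=x and n=n and B=B and \<gamma>=\<gamma>, OF H1 H2 H3 Ha Hb] boundG[where x=x and n=n and B=B and \<gamma>=\<gamma>, OF H1 H2 H3 Ha Hb]
      unfolding eG eD by auto
  qed
  have AE1: "AE s in lborel. s \<in> {0..t} \<longrightarrow> SA s \<le> n * (\<alpha> + 2 * \<bar>\<gamma>\<bar> * B) + (2 * \<beta> * n * n) * G s"
    using strict by eventually_elim (use pw in auto)
  have AE2: "AE s in lborel. s \<in> {0..t} \<longrightarrow> G s \<le> ((n - 1) * (n * \<alpha> + 2 * \<bar>\<gamma>\<bar> * n * B)) / \<beta> + ((n - 1) / \<beta>) * SA s"
    using strict
  proof eventually_elim
    case (elim s)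
    show ?case
    proof
      assume s: "s \<in> {0..t}"
      then have "\<beta> * G s \<le> (n - 1) * (n * \<alpha> + 2 * \<bar>\<gamma>\<bar> * n * B + SA s)" using pw elim by auto
      then have "G s \<le> ((n - 1) * (n * \<alpha> + 2 * \<bar>\<gamma>\<bar> * n * B + SA s)) / \<beta>"
        using Hb by (simp add: pos_le_divide_eq mult.commute)
      then show "G s \<le> ((n - 1) * (n * \<alpha> + 2 * \<bar>\<gamma>\<bar> * n * B)) / \<beta> + ((n - 1) / \<beta>) * SA s"
        by (simp add: add_divide_distrib distrib_left)
    qed
  qed
  have c1: "0 \<le> real n * (\<alpha> + 2 * \<bar>\<gamma>\<bar> * B)" using Ha B0 by auto
  have c2: "0 \<le> 2 * \<beta> * real n * real n" using Hb by auto
  have c3: "0 \<le> ((n - 1) * (n * \<alpha> + 2 * \<bar>\<gamma>\<bar> * n * B)) / \<beta>" using Ha Hb B0 by auto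
  have c4: "0 \<le> (real (n - 1)) / \<beta>" using Hb by auto
  show ?thesis unfolding L R
  proof
    assume "(\<integral>\<^sup>+ s\<in>{0..t}. ennreal (G s) \<partial>lborel) < \<infinity>"
    then show "(\<integral>\<^sup>+ s\<in>{0..t}. ennreal (SA s) \<partial>lborel) < \<infinity>"
      by (rule fin_transfer[OF Gm AE1 c2 c1])
  next
    assume "(\<integral>\<^sup>+ s\<in>{0..t}. ennreal (SA s) \<partial>lborel) < \<infinity>"
    then show "(\<integral>\<^sup>+ s\<in>{0..t}. ennreal (G s) \<partial>lborel) < \<infinity>"
      by (rule fin_transfer[OF SAm AE2 c4 c3])
  qed
qed

end
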